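(* In the transactional panorama model with the lenses and metrics described in the context, $S(\mathrm{LCMB}) \le S(\mathrm{LCNB})$ and $S(\mathrm{ICNB}) \le S(\mathrm{LCNB})$, while the order between $S(\mathrm{LCMB})$ and $S(\mathrm{ICNB})$ depends on the workload (neither inequality between them holds for all workloads).
   Context: A view graph is a DAG on a set $N$ of nodes (source data and views). Write transactions are processed one at a time; write transaction $w^{t_i}$ creates version $G^{t_i}$ with state set $V^{t_i}$ containing, for each node $n_k$, either its computed new result $v_k^{t_i}$, a placeholder $UC_k^{t_i}$ if $w^{t_i}$ updates $n_k$ but has not yet computed it, or its result from the previous version if $n_k$ is not updated. A version is committed once all its new results are computed; at any time there is the committed graph (most recently committed version, no UCs) and the latest graph (version of the most recent write transaction). Read transactions $r^{s_1},\dots,r^{s_m}$ each read the views in the current viewport and return immediately a set $H^{s_i}$ of states (results or UCs); $Time(r^{s_i})$ is its return time. A returned state's timestamp is that of its version. Lenses: LCNB returns the viewport states from the more recent of the committed and latest graphs that has zero UCs for the viewport. LCMB: if reading either the committed or the latest graph preserves monotonicity (no view gets a state with smaller timestamp than previously read), behave like LCNB; otherwise read the latest graph. ICNB returns, for each view independently, its most recently computed result. Staleness for $R=\{r^{s_1},\dots,r^{s_m}\}$: $S(R)=\sum_{i=1}^{m-1}\sum_{v_k^{t_j}\in H^{s_i}_{qr}}\mathbf{1}[v_k^{t_j}\notin V^{t_i}]\,(Time(r^{s_{i+1}})-Time(r^{s_i}))$ where $H^{s_i}_{qr}$ is the set of view results (non-UC states) in $H^{s_i}$ and $G^{t_i}$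 is the latest version before $r^{s_i}$ starts. $S(A)$ denotes staleness under lens $A$; lenses are compared on the same write transactions, the same order of computing new view results, and the same sequence of read transactions. A workload consists of the view graph, viewports, and read/write transactions. *)

theory Defs
  imports Main "HOL.Real"
begin

text \<open>Version 0 is the
initial version (all results computed, timestamp 0); write transaction i (1 \<le> i \<le> nw)
starts at time wstart i, updates the nodes in upd i, and the new result of node k
for version i is computed at time ctime i k. Read transaction r (r < nr) happens
(and returns) at time rtime r and reads the views in viewport vport r.\<close>

record workload =
  nodes  :: "nat set"
  edges  :: "(nat \<times> nat) set"
  nw     :: nat
  wstart :: "nat \<Rightarrow> real"
  upd    :: "nat \<Rightarrow> nat set"
  ctime  :: "nat \<Rightarrow> nat \<Rightarrow> real"
  nr     :: nat
  rtime  :: "nat \<Rightarrow> real"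
  vport  :: "nat \<Rightarrow> nat set"

text \<open>Views: nodes of the DAG that are not source data (have an incoming edge).\<close>
definition views :: "workload \<Rightarrow> nat set" where
  "views w = {n \<in> nodes w. \<exists>m. (m, n) \<in> edges w}"

definition wf_workload :: "workload \<Rightarrow> bool" where
  "wf_workload w \<longleftrightarrow>
     finite (nodes w) \<and> edges w \<subseteq> nodes w \<times> nodes w \<and> acyclic (edges w) \<and>
     (\<forall>i\<in>{1..nw w}. upd w i \<subseteq> nodes w) \<and>
     (\<forall>i\<in>{1..nw w}. \<forall>j\<in>{1..nw w}. i < j \<longrightarrow> wstart w i < wstart w j) \<and>
     (\<forall>i\<in>{1..nw w}. \<forall>k\<in>upd w i. wstart w i \<le> ctime w i k) \<and>
     (\<forall>i<nr w. \<forall>j<nr w. i < j \<longrightarrow> rtime w i < rtime w j) \<and>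
     (\<forall>i<nr w. vport w i \<subseteq> views w)"

text \<open>States: Res k j is the result v_k^{t_j}, UC k j the placeholder UC_k^{t_j}.\<close>
datatype state = Res nat nat | UC nat nat

fun is_res :: "state \<Rightarrow> bool" where
  "is_res (Res _ _) = True" | "is_res (UC _ _) = False"

definition latest :: "workload \<Rightarrow> real \<Rightarrow> nat" where
  "latest w \<tau> = Max ({0} \<union> {i \<in> {1..nw w}. wstart w i \<le> \<tau>})"

text \<open>Version of the state of node k in G^{t_i}: the last write transaction up to i updating k.\<close>
definition lastupd :: "workload \<Rightarrow> nat \<Rightarrow> nat \<Rightarrow> nat" where
  "lastupd w k i = Max ({0} \<union> {j \<in> {1..min i (nw w)}. k \<in> upd w j})"

definition computed :: "workload \<Rightarrow> nat \<Rightarrow> nat \<Rightarrow> real \<Rightarrow> bool" where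
  "computed w j k \<tau> \<longleftrightarrow> j = 0 \<or> ctime w j k \<le> \<tau>"

definition state_in :: "workload \<Rightarrow> nat \<Rightarrow> nat \<Rightarrow> real \<Rightarrow> state" where
  "state_in w i k \<tau> = (let j = lastupd w k i in
      if computed w j k \<tau> then Res k j else UC k j)"

definition Vset :: "workload \<Rightarrow> nat \<Rightarrow> real \<Rightarrow> state set" where
  "Vset w i \<tau> = (\<lambda>k. state_in w i k \<tau>) ` nodes w"

definition no_uc :: "workload \<Rightarrow> nat \<Rightarrow> nat set \<Rightarrow> real \<Rightarrow> bool" where
  "no_uc w i S \<tau> \<longleftrightarrow> (\<forall>k\<in>S. computed w (lastupd w k i) k \<tau>)"

definition committed :: "workload \<Rightarrow> real \<Rightarrow> nat" where
  "committed w \<tau> = Max {i \<in> {0..latest w \<tau>}. no_uc w i (nodes w) \<tau>}"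

definition read_ver :: "workload \<Rightarrow> nat \<Rightarrow> nat set \<Rightarrow> real \<Rightarrow> state set" where
  "read_ver w i P \<tau> = (\<lambda>k. state_in w i k \<tau>) ` P"

definition lcnb_ver :: "workload \<Rightarrow> real \<Rightarrow> nat set \<Rightarrow> nat" where
  "lcnb_ver w \<tau> P = (if no_uc w (latest w \<tau>) P \<tau> then latest w \<tau> else committed w \<tau>)"

text \<open>LCMB, given the history h (maximal timestamp read so far for each view,
0 if never read; all timestamps are \<ge> 0).\<close>
definition lcmb_ver_h :: "workload \<Rightarrow> (nat \<Rightarrow> nat) \<Rightarrow> nat \<Rightarrow> nat" where
  "lcmb_ver_h w h r = (let \<tau> = rtime w r; P = vport w r;
      L = latest w \<tau>; C = committed w \<tau>;
      mono = (\<lambda>G. \<forall>k\<in>P. h k \<le> lastupd w k G)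
    in if mono C \<and> mono L then lcnb_ver w \<tau> P else L)"

primrec lcmb_hist :: "workload \<Rightarrow> nat \<Rightarrow> (nat \<Rightarrow> nat)" where
  "lcmb_hist w 0 = (\<lambda>k. 0)"
| "lcmb_hist w (Suc r) = (\<lambda>k. if k \<in> vport w r
       then max (lcmb_hist w r k) (lastupd w k (lcmb_ver_h w (lcmb_hist w r) r))
       else lcmb_hist w r k)"

definition lcmb_ver :: "workload \<Rightarrow> nat \<Rightarrow> nat" where
  "lcmb_ver w r = lcmb_ver_h w (lcmb_hist w r) r"

definition icnb_state :: "workload \<Rightarrow> nat \<Rightarrow> real \<Rightarrow> state" where
  "icnb_state w k \<tau> = Res k (Max ({0} \<union>
      {j \<in> {1..latest w \<tau>}. k \<in> upd w j \<and> ctime w j k \<le> \<tau>}))"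

datatype lens = LCNB | LCMB | ICNB

fun H :: "workload \<Rightarrow> lens \<Rightarrow> nat \<Rightarrow> state set" where
  "H w LCNB r = read_ver w (lcnb_ver w (rtime w r) (vport w r)) (vport w r) (rtime w r)"
| "H w LCMB r = read_ver w (lcmb_ver w r) (vport w r) (rtime w r)"
| "H w ICNB r = (\<lambda>k. icnb_state w k (rtime w r)) ` vport w r"

definition staleness :: "workload \<Rightarrow> lens \<Rightarrow> real" where
  "staleness w A = (\<Sum>i\<in>{..<nr w - 1}.
      (\<Sum>s\<in>{s \<in> H w A i. is_res s}.
          (if s \<notin> Vset w (latest w (rtime w i)) (rtime w i) then 1 else 0))
      * (rtime w (Suc i) - rtime w i))"

end

theory Submission
  imports Defs
begin


fun snode :: "state \<Rightarrow> nat" where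
  "snode (Res k _) = k" | "snode (UC k _) = k"

lemma snode_state_in[simp]: "snode (state_in w i k \<tau>) = k"
  by (simp add: state_in_def Let_def)

lemma latest_le: "latest w \<tau> \<le> nw w"
  unfolding latest_def by (rule Max.boundedI) auto

lemma lastupd_0[simp]: "lastupd w k 0 = 0"
  unfolding lastupd_def by simp

lemma committed_no_uc: "no_uc w (committed w \<tau>) (nodes w) \<tau>"
proof -
  have "committed w \<tau> \<in> {i \<in> {0..latest w \<tau>}. no_uc w i (nodes w) \<tau>}"
    unfolding committed_def
    by (rule Max_in) (auto simp: no_uc_def computed_def intro!: exI[of _ 0])
  thus ?thesis by simp
qed

lemma Res_in_Vset: "Res k j \<in> Vset w L \<tau> \<Longrightarrow> state_in w L k \<tau> = Res k j"
  unfolding Vset_def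
  by (metis (no_types, lifting) image_iff snode.simps(1) snode_state_in)

lemma read_ver_sub: "P \<subseteq> nodes w \<Longrightarrow> read_ver w L P \<tau> \<subseteq> Vset w L \<tau>"
  unfolding read_ver_def Vset_def by auto

lemma icnb_eq:
  assumes "computed w (lastupd w k (latest w \<tau>)) k \<tau>"
  shows "icnb_state w k \<tau> = state_in w (latest w \<tau>) k \<tau>"
proof -
  let ?L = "latest w \<tau>"
  have mL: "min ?L (nw w) = ?L" using latest_le[of w \<tau>] by simp
  define m where "m = lastupd w k ?L"
  have mdef: "m = Max ({0} \<union> {j \<in> {1..?L}. k \<in> upd w j})"
    unfolding m_def lastupd_def mL ..
  have min: "m \<in> {0} \<union> {j \<in> {1..?L}. k \<in> upd w j}"
    unfolding mdef by (rule Max_in) auto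
  have mub: "\<And>j. j \<in> {0} \<union> {j \<in> {1..?L}. k \<in> upd w j} \<Longrightarrow> j \<le> m"
    unfolding mdef by (rule Max_ge) auto
  have "Max ({0} \<union> {j \<in> {1..?L}. k \<in> upd w j \<and> ctime w j k \<le> \<tau>}) = m"
  proof (rule Max_eqI)
    show "finite ({0} \<union> {j \<in> {1..?L}. k \<in> upd w j \<and> ctime w j k \<le> \<tau>})" by auto
    show "\<And>y. y \<in> {0} \<union> {j \<in> {1..?L}. k \<in> upd w j \<and> ctime w j k \<le> \<tau>} \<Longrightarrow> y \<le> m"
      using mub by auto
    show "m \<in> {0} \<union> {j \<in> {1..?L}. k \<in> upd w j \<and> ctime w j k \<le> \<tau>}"
      using min assms unfolding m_def[symmetric] computed_def by auto
  qed
  thus ?thesis using assms unfolding icnb_state_def state_in_def m_def[symmetric]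
    by (simp add: Let_def)
qed

lemma cnt_card:
  assumes "finite A"
  shows "(\<Sum>s\<in>A. (if Q s then 1 else 0::real)) = real (card {s\<in>A. Q s})"
  using assms by (simp add: sum.If_cases Int_def conj_commute)

lemma vport_nodes: "wf_workload w \<Longrightarrow> r < nr w \<Longrightarrow> vport w r \<subseteq> nodes w"
  unfolding wf_workload_def views_def by blast

definition cnt :: "workload \<Rightarrow> lens \<Rightarrow> nat \<Rightarrow> real" where
  "cnt w A i = (\<Sum>s\<in>{s \<in> H w A i. is_res s}.
          (if s \<notin> Vset w (latest w (rtime w i)) (rtime w i) then 1 else 0))"

lemma cnt_nonneg: "0 \<le> cnt w A i"
  unfolding cnt_def by (rule sum_nonneg) auto

lemma cnt_lcmb:
  assumes "wf_workload w" "i < nr w"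
  shows "cnt w LCMB i \<le> cnt w LCNB i"
proof (cases "lcmb_ver w i = lcnb_ver w (rtime w i) (vport w i)")
  case True
  then show ?thesis unfolding cnt_def by simp
next
  case False
  hence "lcmb_ver w i = latest w (rtime w i)"
    unfolding lcmb_ver_def lcmb_ver_h_def by (auto simp: Let_def split: if_splits)
  hence "H w LCMB i \<subseteq> Vset w (latest w (rtime w i)) (rtime w i)"
    using read_ver_sub[OF vport_nodes[OF assms]] by simp
  hence "cnt w LCMB i = 0" unfolding cnt_def by (intro sum.neutral) auto
  then show ?thesis using cnt_nonneg by simp
qed

lemma cnt_icnb:
  assumes "wf_workload w" "i < nr w"
  shows "cnt w ICNB i \<le> cnt w LCNB i"
proof -
  let ?\<tau> = "rtime w i" let ?P = "vport w i" let ?L = "latest w ?\<tau>"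
  let ?V = "Vset w ?L ?\<tau>"
  have Pn: "?P \<subseteq> nodes w" by (rule vport_nodes[OF assms])
  have fin: "finite (nodes w)" using assms(1) unfolding wf_workload_def by blast
  hence finP: "finite ?P" using Pn finite_subset by blast
  define K where "K = {k \<in> ?P. \<not> computed w (lastupd w k ?L) k ?\<tau>}"
  have finK: "finite K" using finP unfolding K_def by auto
  have icnbset: "{s \<in> {s \<in> H w ICNB i. is_res s}. s \<notin> ?V} \<subseteq> (\<lambda>k. icnb_state w k ?\<tau>) ` K"
  proof
    fix s assume s: "s \<in> {s \<in> {s \<in> H w ICNB i. is_res s}. s \<notin> ?V}"
    then obtain k where k: "k \<in> ?P" "s = icnb_state w k ?\<tau>" by auto
    have "k \<in> K"
    proof (rule ccontr)
      assume "k \<notin> K"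
      hence "computed w (lastupd w k ?L) k ?\<tau>" using k unfolding K_def by auto
      hence "s = state_in w ?L k ?\<tau>" using icnb_eq k by metis
      hence "s \<in> ?V" using k Pn unfolding Vset_def by auto
      thus False using s by auto
    qed
    thus "s \<in> (\<lambda>k. icnb_state w k ?\<tau>) ` K" using k by auto
  qed
  have c1: "cnt w ICNB i \<le> real (card K)"
  proof -
    have "cnt w ICNB i = real (card {s \<in> {s \<in> H w ICNB i. is_res s}. s \<notin> ?V})"
      unfolding cnt_def by (rule cnt_card) (use finP in auto)
    also have "\<dots> \<le> real (card ((\<lambda>k. icnb_state w k ?\<tau>) ` K))"
      using icnbset finK by (simp add: card_mono)
    also have "\<dots> \<le> real (card K)" by (simp add: card_image_le finK)
    finally show ?thesis .
  qed
  show ?thesis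
  proof (cases "K = {}")
    case True
    then show ?thesis using c1 cnt_nonneg[of w LCNB i] by simp
  next
    case False
    hence nuc: "\<not> no_uc w ?L ?P ?\<tau>" unfolding K_def no_uc_def by auto
    let ?C = "committed w ?\<tau>"
    have H: "H w LCNB i = read_ver w ?C ?P ?\<tau>"
      using nuc by (simp add: lcnb_ver_def)
    have sub: "(\<lambda>k. state_in w ?C k ?\<tau>) ` K \<subseteq> {s \<in> {s \<in> H w LCNB i. is_res s}. s \<notin> ?V}"
    proof
      fix s assume "s \<in> (\<lambda>k. state_in w ?C k ?\<tau>) ` K"
      then obtain k where k: "k \<in> K" "s = state_in w ?C k ?\<tau>" by auto
      have kP: "k \<in> ?P" using k K_def by auto
      have "computed w (lastupd w k ?C) k ?\<tau>"
        using committed_no_uc[of w ?\<tau>] kP Pn unfolding no_uc_def by auto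
      hence sr: "s = Res k (lastupd w k ?C)" using k by (simp add: state_in_def)
      have "s \<notin> ?V"
      proof
        assume "s \<in> ?V"
        hence "state_in w ?L k ?\<tau> = s" using sr Res_in_Vset by metis
        hence "computed w (lastupd w k ?L) k ?\<tau>" using sr
          by (simp add: state_in_def Let_def split: if_splits)
        thus False using k K_def by auto
      qed
      thus "s \<in> {s \<in> {s \<in> H w LCNB i. is_res s}. s \<notin> ?V}"
        using sr kP H k unfolding read_ver_def by (metis (mono_tags, lifting) image_eqI is_res.simps(1) mem_Collect_eq)
    qed
    have inj: "inj_on (\<lambda>k. state_in w ?C k ?\<tau>) K"
      by (rule inj_onI) (metis snode_state_in)
    have "real (card K) = real (card ((\<lambda>k. state_in w ?C k ?\<tau>) ` K))"
      using card_image[OF inj] by simp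
    also have "\<dots> \<le> real (card {s \<in> {s \<in> H w LCNB i. is_res s}. s \<notin> ?V})"
      using sub by (simp add: card_mono H read_ver_def finP)
    also have "\<dots> = cnt w LCNB i"
      unfolding cnt_def by (rule cnt_card[symmetric]) (use finP H read_ver_def in auto)
    finally show ?thesis using c1 by simp
  qed
qed

lemma stal_cnt: "staleness w A = (\<Sum>i\<in>{..<nr w - 1}. cnt w A i * (rtime w (Suc i) - rtime w i))"
  unfolding staleness_def cnt_def ..

lemma stal_mono:
  assumes "wf_workload w" "\<And>i. i < nr w \<Longrightarrow> cnt w A i \<le> cnt w B i"
  shows "staleness w A \<le> staleness w B"
  unfolding stal_cnt
proof (rule sum_mono)
  fix i assume "i \<in> {..<nr w - 1}"
  hence i: "i < nr w" "Suc i < nr w" by auto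
  hence "rtime w i < rtime w (Suc i)" using assms(1) unfolding wf_workload_def by auto
  thus "cnt w A i * (rtime w (Suc i) - rtime w i) \<le> cnt w B i * (rtime w (Suc i) - rtime w i)"
    using assms(2)[OF i(1)] by (simp add: mult_right_mono)
qed



lemma Collect_insert_filter:
  "{x \<in> insert a A. P x} = (if P a then insert a {x \<in> A. P x} else {x \<in> A. P x})"
  by auto

lemma ivs: "{1..1::nat} = {1}" "{1..2::nat} = {1,2}" "{0..1::nat} = {0,1}" "{0..2::nat} = {0,1,2}"
  "{..<1::nat} = {0}" "{..<2::nat} = {0,1}"
  by auto

lemma acyc: "acyclic {(0::nat,1::nat),(0,2)}"
proof -
  have "trans {(0::nat,1::nat),(0,2)}" unfolding trans_def by blast
  hence e: "{(0::nat,1::nat),(0,2)}\<^sup>+ = {(0::nat,1::nat),(0,2)}" by (rule trancl_id)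
  show ?thesis unfolding acyclic_def e by auto
qed

definition WA :: workload where
  "WA = \<lparr> nodes = {0,1,2}, edges = {(0,1),(0,2)}, nw = 1, wstart = (\<lambda>_. 1),
     upd = (\<lambda>_. {0,1,2}), ctime = (\<lambda>i k. if k = 2 then 1 else 100), nr = 2,
     rtime = (\<lambda>r. real r + 2), vport = (\<lambda>_. {1,2}) \<rparr>"

lemma views_WA: "views WA = {1,2}"
  unfolding views_def WA_def by auto

lemma wf_WA: "wf_workload WA"
  unfolding wf_workload_def views_WA using acyc by (simp add: WA_def)

lemma WA_sel[simp]: "nodes WA = {0,1,2}" "nw WA = 1" "wstart WA i = 1" "upd WA i = {0,1,2}"
  "ctime WA i k = (if k = 2 then 1 else 100)" "nr WA = 2" "rtime WA r = real r + 2" "vport WA r = {1,2}"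
  by (simp_all add: WA_def)

lemma WA_latest: "latest WA 2 = 1"
  unfolding latest_def by (simp add: ivs Collect_insert_filter)

lemma WA_lastupd: "lastupd WA k 1 = (if k \<in> {0,1,2} then 1 else 0)"
  unfolding lastupd_def by (simp add: ivs Collect_insert_filter)

lemma WA_lastupd': "lastupd WA k (Suc 0) = (if k \<in> {0,1,2} then 1 else 0)"
  using WA_lastupd by simp

lemma WA_committed: "committed WA 2 = 0"
proof -
  have "{i \<in> {0..1::nat}. no_uc WA i (nodes WA) 2} = {0}"
    unfolding ivs by (auto simp: no_uc_def WA_lastupd WA_lastupd' computed_def)
  thus ?thesis unfolding committed_def WA_latest by simp
qed

lemma WA_states: "state_in WA 1 k 2 = (if k = 2 then Res 2 1 else if k \<in> {0,1} then UC k 1 else Res k 0)"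
  "state_in WA 0 k 2 = Res k 0"
  by (auto simp: state_in_def WA_lastupd WA_lastupd' computed_def)

lemma WA_V: "Vset WA 1 2 = {UC 0 1, UC 1 1, Res 2 1}"
  unfolding Vset_def WA_sel image_insert image_empty WA_states by simp

lemma WA_V': "Vset WA (Suc 0) 2 = {UC 0 1, UC 1 1, Res 2 1}"
  using WA_V by simp

lemma WA_lcmb: "lcmb_ver WA 0 = 0"
  unfolding lcmb_ver_def lcmb_ver_h_def lcnb_ver_def
  by (simp add: Let_def WA_latest WA_committed no_uc_def WA_lastupd WA_lastupd' computed_def)

lemma WA_icnb: "icnb_state WA 1 2 = Res 1 0" "icnb_state WA 2 2 = Res 2 1"
  unfolding icnb_state_def WA_latest ivs by (simp_all add: Collect_insert_filter)

lemma WA_H1: "{s \<in> H WA LCMB 0. is_res s} = {Res 1 0, Res 2 0}"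
  by (auto simp: WA_lcmb read_ver_def WA_states)

lemma WA_H2: "{s \<in> H WA ICNB 0. is_res s} = {Res 1 0, Res 2 1}"
  using WA_icnb by auto

lemma WA_S1: "staleness WA LCMB = 2"
proof -
  have "staleness WA LCMB = cnt WA LCMB 0" unfolding stal_cnt by (simp add: ivs)
  also have "\<dots> = 2" unfolding cnt_def WA_H1 by (simp add: WA_latest WA_V WA_V')
  finally show ?thesis .
qed

lemma WA_S2: "staleness WA ICNB = 1"
proof -
  have "staleness WA ICNB = cnt WA ICNB 0" unfolding stal_cnt by (simp add: ivs)
  also have "\<dots> = 1" unfolding cnt_def WA_H2 by (simp add: WA_latest WA_V WA_V')
  finally show ?thesis .
qed


lemma cnt_latest:
  assumes "wf_workload w" "i < nr w" "lcmb_ver w i = latest w (rtime w i)"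
  shows "cnt w LCMB i = 0"
proof -
  have "H w LCMB i \<subseteq> Vset w (latest w (rtime w i)) (rtime w i)"
    using read_ver_sub[OF vport_nodes[OF assms(1,2)]] assms(3) by simp
  thus "cnt w LCMB i = 0" unfolding cnt_def by (intro sum.neutral) auto
qed

definition WB :: workload where
  "WB = \<lparr> nodes = {0,1,2}, edges = {(0,1),(0,2)}, nw = 2, wstart = (\<lambda>i. 2 * real i - 1),
     upd = (\<lambda>i. if i = 1 then {1,2} else {1}), ctime = (\<lambda>i k. if i = 1 \<and> k = 1 then 1 else 100), nr = 3,
     rtime = (\<lambda>r. if r = 0 then 2 else real r + 3), vport = (\<lambda>_. {1}) \<rparr>"

lemma WB_sel[simp]: "nodes WB = {0,1,2}" "edges WB = {(0,1),(0,2)}" "nw WB = 2" "wstart WB i = 2 * real i - 1"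
  "upd WB i = (if i = 1 then {1,2} else {1})"
  "ctime WB i k = (if i = 1 \<and> k = 1 then 1 else 100)" "nr WB = 3"
  "rtime WB r = (if r = 0 then 2 else real r + 3)" "vport WB r = {1}"
  by (simp_all add: WB_def)

lemma views_WB: "views WB = {1,2}"
  unfolding views_def by auto

lemma wf_WB: "wf_workload WB"
  unfolding wf_workload_def views_WB using acyc by auto

lemma WB_latest: "latest WB 2 = 1" "latest WB 4 = 2"
proof -
  have "{i \<in> {1..nw WB}. wstart WB i \<le> 2} = {1}" by (auto simp: ivs)
  thus "latest WB 2 = 1" unfolding latest_def by simp
  have "{i \<in> {1..nw WB}. wstart WB i \<le> 4} = {1,2}" by (auto simp: ivs)
  thus "latest WB 4 = 2" unfolding latest_def by simp
qed

lemma WB_lastupd: "lastupd WB 1 1 = 1" "lastupd WB 1 2 = 2" "lastupd WB 2 1 = 1" "lastupd WB 2 2 = 1"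
proof -
  have "{j \<in> {1..min 1 (nw WB)}. 1 \<in> upd WB j} = {1}" by auto
  thus "lastupd WB 1 1 = 1" unfolding lastupd_def by simp
  have "{j \<in> {1..min 2 (nw WB)}. 1 \<in> upd WB j} = {1,2}" by auto
  thus "lastupd WB 1 2 = 2" unfolding lastupd_def by simp
  have "{j \<in> {1..min 1 (nw WB)}. 2 \<in> upd WB j} = {1}" by auto
  thus "lastupd WB 2 1 = 1" unfolding lastupd_def by simp
  have "{j \<in> {1..min 2 (nw WB)}. 2 \<in> upd WB j} = {1}" by auto
  thus "lastupd WB 2 2 = 1" unfolding lastupd_def by simp
qed

lemma WB_committed: "committed WB 4 = 0"
proof -
  have "{i \<in> {0..2::nat}. no_uc WB i (nodes WB) 4} = {0}"
    unfolding ivs using WB_lastupd by (auto simp: no_uc_def computed_def)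
  thus ?thesis unfolding committed_def WB_latest by simp
qed

lemma WB_l0: "lcmb_ver WB 0 = latest WB (rtime WB 0)"
proof -
  have "no_uc WB 1 {1} 2" using WB_lastupd by (simp add: no_uc_def computed_def)
  thus ?thesis unfolding lcmb_ver_def lcmb_ver_h_def lcnb_ver_def
    by (simp add: Let_def WB_latest)
qed

lemma WB_h1: "lcmb_hist WB 1 1 = 1"
  using WB_l0 WB_lastupd by (simp add: lcmb_ver_def WB_latest)

lemma WB_l1: "lcmb_ver WB 1 = latest WB (rtime WB 1)"
proof -
  have "rtime WB 1 = 4" by simp
  thus ?thesis unfolding lcmb_ver_def lcmb_ver_h_def
    using WB_h1 by (simp add: Let_def WB_latest WB_committed)
qed

lemma WB_S1: "staleness WB LCMB = 0"
proof -
  have "{..<nr WB - 1} = {0,1}" by auto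
  moreover have "cnt WB LCMB 0 = 0" by (rule cnt_latest[OF wf_WB _ WB_l0]) simp
  moreover have "cnt WB LCMB 1 = 0" by (rule cnt_latest[OF wf_WB _ WB_l1]) simp
  ultimately show ?thesis unfolding stal_cnt by simp
qed

lemma WB_S2: "staleness WB ICNB \<ge> 1"
proof -
  have "{j \<in> {1..2::nat}. 1 \<in> upd WB j \<and> ctime WB j 1 \<le> 4} = {1}" by auto
  hence ic: "icnb_state WB 1 4 = Res 1 1"
    unfolding icnb_state_def WB_latest by simp
  have nv: "Res 1 1 \<notin> Vset WB 2 4"
  proof
    assume "Res 1 1 \<in> Vset WB 2 4"
    hence "state_in WB 2 1 4 = Res 1 1" by (rule Res_in_Vset)
    thus False using WB_lastupd by (simp add: state_in_def Let_def split: if_splits)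
  qed
  have r1: "rtime WB 1 = 4" by simp
  have "H WB ICNB 1 = {Res 1 1}" using ic r1 by simp
  hence "{s \<in> H WB ICNB 1. is_res s} = {Res 1 1}" by auto
  hence c1: "cnt WB ICNB 1 = 1" unfolding cnt_def r1 WB_latest using nv by simp
  have "{..<nr WB - 1} = {0,1}" by auto
  hence "staleness WB ICNB = cnt WB ICNB 0 * (rtime WB 1 - rtime WB 0) + cnt WB ICNB 1 * (rtime WB 2 - rtime WB 1)"
    unfolding stal_cnt by simp
  also have "\<dots> = cnt WB ICNB 0 * 2 + cnt WB ICNB 1" by simp
  finally show ?thesis using c1 cnt_nonneg[of WB ICNB 0] by simp
qed


theorem theorem2p9:
  shows "(\<forall>w. wf_workload w \<longrightarrow> staleness w LCMB \<le> staleness w LCNB)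
       \<and> (\<forall>w. wf_workload w \<longrightarrow> staleness w ICNB \<le> staleness w LCNB)
       \<and> \<not> (\<forall>w. wf_workload w \<longrightarrow> staleness w LCMB \<le> staleness w ICNB)
       \<and> \<not> (\<forall>w. wf_workload w \<longrightarrow> staleness w ICNB \<le> staleness w LCMB)"
proof (intro conjI allI impI notI)
  fix w assume "wf_workload w"
  thus "staleness w LCMB \<le> staleness w LCNB" using cnt_lcmb by (intro stal_mono) blast+
next
  fix w assume "wf_workload w"
  thus "staleness w ICNB \<le> staleness w LCNB" using cnt_icnb by (intro stal_mono) blast+
next
  assume "\<forall>w. wf_workload w \<longrightarrow> staleness w LCMB \<le> staleness w ICNB"
  hence "staleness WA LCMB \<le> staleness WA ICNB" using wf_WA by blast
  thus False using WA_S1 WA_S2 by simp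
next
  assume "\<forall>w. wf_workload w \<longrightarrow> staleness w ICNB \<le> staleness w LCMB"
  hence "staleness WB ICNB \<le> staleness WB LCMB" using wf_WB by blast
  thus False using WB_S1 WB_S2 by simp
qed

end
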